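(* Let $(a_k)_{k\ge1}$ be positive integers, $M_0=0$, $M_1=0^{a_1-1}1$, $M_{k+1}=M_k^{a_{k+1}}M_{k-1}$ ($k\ge1$), $q_k=|M_k|$, and $\tilde M_k=(M_kM_{k-1})^{--}$ for $k\ge1$. Let $k\ge1$ and let $\mathbf{x}$ be an infinite word of the form $\mathbf{x}=UV\cdots$ (i.e. $UV$ is a prefix of $\mathbf{x}$), where $U$ is a finite word and $V$ is a factor of $M_k\tilde M_{k+1}$ with $|V|>q_k$. Then $r(|V|-q_k,\mathbf{x})\le|UV|$.
   Context: $|W|$ denotes the length of a word $W$; $W^{--}$ denotes $W$ deprived of its last two letters. For $\mathbf{x}=x_1x_2\ldots$, $x_i^j=x_i\cdots x_j$ and $r(n,\mathbf{x})=\min\{m\ge1:\ x_i^{i+n-1}=x_{m-n+1}^{m}\text{ for some } 1\le i\le m-n\}$. *)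

theory Defs
  imports Main
begin

text \<open>Words are lists over nat (letters 0 and 1). The sequence (a_k)_{k>=1} is a function
  a :: nat => nat, of which only the values a 1, a 2, ... are used.\<close>

fun Mw :: "(nat \<Rightarrow> nat) \<Rightarrow> nat \<Rightarrow> nat list" where
  "Mw a 0 = [0]"
| "Mw a (Suc 0) = replicate (a 1 - 1) 0 @ [1]"
| "Mw a (Suc (Suc k)) = concat (replicate (a (Suc (Suc k))) (Mw a (Suc k))) @ Mw a k"

definition q :: "(nat \<Rightarrow> nat) \<Rightarrow> nat \<Rightarrow> nat" where
  "q a k = length (Mw a k)"

definition dropLast2 :: "'b list \<Rightarrow> 'b list" where
  "dropLast2 W = take (length W - 2) W"

definition Mtilde :: "(nat \<Rightarrow> nat) \<Rightarrow> nat \<Rightarrow> nat list" where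
  "Mtilde a k = dropLast2 (Mw a k @ Mw a (k - 1))"

definition is_factor :: "'b list \<Rightarrow> 'b list \<Rightarrow> bool" where
  "is_factor V W \<longleftrightarrow> (\<exists>P S. W = P @ V @ S)"

text \<open>Infinite words x = x_1 x_2 ... are functions nat => 'b with x_i = x (i - 1)
  (0-based storage). r(n,x) = min{m >= 1 : x_i^{i+n-1} = x_{m-n+1}^m for some 1 <= i <= m-n}.\<close>
definition r :: "nat \<Rightarrow> (nat \<Rightarrow> 'b) \<Rightarrow> nat" where
  "r n x = (LEAST m. 1 \<le> m \<and>
     (\<exists>i. 1 \<le> i \<and> i + n \<le> m \<and> (\<forall>j<n. x (i - 1 + j) = x (m - n + j))))"

definition is_prefix_of_inf :: "'b list \<Rightarrow> (nat \<Rightarrow> 'b) \<Rightarrow> bool" where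
  "is_prefix_of_inf W x \<longleftrightarrow> (\<forall>j<length W. x j = W ! j)"

end

theory Submission
  imports Defs "HOL-Library.Sublist"
begin

lemma Mw_len: "length (Mw a k) \<ge> 1"
  by (induction a k rule: Mw.induct) auto

lemma concat_rep_comm: "M @ concat (replicate n M) = concat (replicate n M) @ M"
  by (induction n) auto

lemma Mw_swap: "\<exists>P c d. Mw a (Suc k) @ Mw a k = P @ [c,d] \<and> Mw a k @ Mw a (Suc k) = P @ [d,c]"
proof (induction k)
  case 0
  have "[0::nat] @ replicate (a 1 - 1) 0 = replicate (a 1 - 1) 0 @ [0]"
    by (simp add: replicate_append_same)
  then show ?case
    by (rule_tac x="replicate (a 1 - 1) 0" in exI, rule_tac x=1 in exI, rule_tac x=0 in exI) simp
next
  case (Suc k)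
  then obtain P c d where h: "Mw a (Suc k) @ Mw a k = P @ [c,d]" "Mw a k @ Mw a (Suc k) = P @ [d,c]"
    by blast
  define C where "C = concat (replicate (a (Suc (Suc k))) (Mw a (Suc k)))"
  have e: "Mw a (Suc (Suc k)) = C @ Mw a k" by (simp add: C_def)
  have c: "Mw a (Suc k) @ C = C @ Mw a (Suc k)" unfolding C_def by (rule concat_rep_comm)
  have 1: "Mw a (Suc (Suc k)) @ Mw a (Suc k) = (C @ P) @ [d,c]" using h(2) e by simp
  have 2: "Mw a (Suc k) @ Mw a (Suc (Suc k)) = (C @ P) @ [c,d]"
    using h(1) e c by (metis append.assoc)
  show ?case using 1 2 by blast
qed

lemma dl2_snoc: "dropLast2 (P @ [c,d]) = P"
  by (simp add: dropLast2_def)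

lemma dl2_swap: "dropLast2 (Mw a (Suc k) @ Mw a k) = dropLast2 (Mw a k @ Mw a (Suc k))"
  using Mw_swap[of a k] dl2_snoc by metis

lemma dl2_app: "length Y \<ge> 2 \<Longrightarrow> dropLast2 (X @ Y) = X @ dropLast2 Y"
  by (simp add: dropLast2_def)

lemma dl2_prefix: "prefix (dropLast2 W) W"
  by (simp add: dropLast2_def take_is_prefix)

lemma Mw_prefix:
  assumes "\<forall>j\<ge>1. a j > 0"
  shows "prefix (dropLast2 (Mw a (Suc k) @ Mw a k)) (Mw a (Suc k) @ Mw a (Suc k))"
proof (cases k)
  case 0
  then show ?thesis by (simp add: dropLast2_def take_is_prefix)
next
  case (Suc k')
  have "a (Suc (Suc k')) > 0" using assms by auto
  then obtain n where "a (Suc (Suc k')) = Suc n" using not0_implies_Suc by blast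
  then have "prefix (Mw a k) (Mw a (Suc k))" using Suc by simp
  then have "prefix (Mw a (Suc k) @ Mw a k) (Mw a (Suc k) @ Mw a (Suc k))" by simp
  then show ?thesis using dl2_prefix prefix_order.trans by blast
qed

lemma periodic_prefix:
  assumes "prefix W (concat (replicate N M))" "j + length M < length W"
  shows "W ! j = W ! (j + length M)"
proof -
  define L where "L = concat (replicate N M)"
  have N: "N \<ge> 1" using assms by (cases N) (auto simp: prefix_def)
  then obtain N' where NN: "N = Suc N'" using not0_implies_Suc by fastforce
  define L' where "L' = concat (replicate N' M)"
  have LL: "L = M @ L'" by (simp add: L_def L'_def NN)
  have "L = L' @ M" by (simp add: L_def L'_def NN concat_rep_comm)
  then have pL: "prefix L' L" by simp
  have lenW: "length W \<le> length L" using assms(1) L_def prefix_length_le by blast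
  have jL': "j < length L'" using LL lenW assms(2) by simp
  have "W ! (j + length M) = L ! (j + length M)"
    using assms L_def by (metis prefix_def nth_append)
  also have "\<dots> = L' ! j" by (simp add: LL nth_append)
  also have "\<dots> = L ! j" using pL jL' by (metis prefix_def nth_append)
  also have "\<dots> = W ! j" using assms L_def by (metis add_lessD1 prefix_def nth_append)
  finally show ?thesis by simp
qed

theorem lemma7p4:
  fixes a :: "nat \<Rightarrow> nat" and k :: nat and x :: "nat \<Rightarrow> nat" and U V :: "nat list"
  assumes "\<forall>j\<ge>1. a j > 0"
    and "k \<ge> 1"
    and "is_prefix_of_inf (U @ V) x"
    and "is_factor V (Mw a k @ Mtilde a (k + 1))"
    and "length V > q a k"
  shows "r (length V - q a k) x \<le> length (U @ V)"
proof -
  obtain k' where kk: "k = Suc k'" using assms(2) by (cases k) auto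
  define M where "M = Mw a k"
  define C where "C = concat (replicate (a (Suc k)) M)"
  define W where "W = Mw a k @ Mtilde a (k + 1)"
  have e: "Mw a (Suc k) = C @ Mw a k'" by (simp add: C_def M_def kk)
  have len2: "length (Mw a k' @ Mw a (Suc k')) \<ge> 2" using Mw_len[of a k'] Mw_len[of a "Suc k'"] by simp
  have "Mtilde a (k+1) = dropLast2 (C @ (Mw a k' @ Mw a k))" by (simp add: Mtilde_def e)
  also have "\<dots> = C @ dropLast2 (Mw a k' @ Mw a (Suc k'))" using dl2_app[OF len2] kk by simp
  also have "\<dots> = C @ dropLast2 (Mw a (Suc k') @ Mw a k')" using dl2_swap by metis
  finally have mt: "Mtilde a (k+1) = C @ dropLast2 (M @ Mw a k')" by (simp add: kk M_def)
  have "prefix (dropLast2 (M @ Mw a k')) (M @ M)" using Mw_prefix[OF assms(1), of k'] kk M_def by simp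
  then have "prefix W (M @ C @ M @ M)" unfolding W_def mt M_def by simp
  moreover have "M @ C @ M @ M = concat (replicate (a (Suc k) + 3) M)"
    by (simp add: C_def concat_rep_comm numeral_3_eq_3)
  ultimately have pW: "prefix W (concat (replicate (a (Suc k) + 3) M))" by simp
  obtain P S where PS: "W = P @ V @ S" using assms(4) W_def is_factor_def by blast
  define n where "n = length V - q a k"
  have qM: "q a k = length M" by (simp add: q_def M_def)
  have q1: "q a k \<ge> 1" using Mw_len q_def by metis
  have perV: "V ! j = V ! (j + q a k)" if "j < n" for j
  proof -
    have "length P + j + length M < length W" using that PS n_def qM assms(5) by simp
    then have w: "W ! (length P + j) = W ! (length P + j + length M)"
      using periodic_prefix[OF pW] by blast
    have jV: "j < length V" using that n_def by simp
    have "W ! (length P + j) = V ! j" using PS jV by (simp add: nth_append)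
    note w this
    moreover have "j + length M < length V" using that n_def qM by simp
    then have "W ! (length P + j + length M) = V ! (j + q a k)"
      using PS qM by (simp add: nth_append add.assoc)
    ultimately show ?thesis by argo
  qed
  have xv: "x (length U + j) = V ! j" if "j < length V" for j
    using assms(3) that unfolding is_prefix_of_inf_def by (metis add_less_cancel_left length_append nth_append_length_plus)
  have "1 \<le> length (U @ V) \<and> (\<exists>i. 1 \<le> i \<and> i + n \<le> length (U @ V) \<and>
     (\<forall>j<n. x (i - 1 + j) = x (length (U @ V) - n + j)))"
  proof (intro conjI exI[of _ "length U + 1"] allI impI)
    show "1 \<le> length (U @ V)" using assms(5) by simp
    show "1 \<le> length U + 1" by simp
    show "length U + 1 + n \<le> length (U @ V)" using n_def q1 assms(5) by simp
    fix j assume j: "j < n"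
    have "length (U @ V) - n + j = length U + (j + q a k)" using n_def assms(5) by simp
    then show "x (length U + 1 - 1 + j) = x (length (U @ V) - n + j)"
      using xv[of j] xv[of "j + q a k"] perV[OF j] j n_def by (simp add: ac_simps)
  qed
  then show ?thesis unfolding r_def n_def[symmetric] by (rule Least_le)
qed

end
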